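(* Work in the Poincaré ball model of $\mathbb{H}^3$ with the notation $S(x)$, $H(x)$, $P_{4,3}(a)$ below. Fix an integer $n>4$ and let $a=a_n>\sqrt2$ be the (unique) value for which the faces of $P_{4,3}(a)$ meet at dihedral angle $2\pi/n$. Consider $b$ with $b>\sqrt3$ and $b>a$, so that $P_{4,3}(b)$ is a finite cube lying inside $P_{4,3}(a)$. For a face $F$ of $P_{4,3}(b)$ (lying on $S(be_i)$ for some signed coordinate vector $e_i$), let $F'$ be the image of $F$ under the hyperbolic reflection (sphere inversion) in the corresponding face $S(ae_i)$ of $P_{4,3}(a)$. Then $F$ and $F'$ are the bottom and top of a prism over a square whose four lateral faces are hyperbolic rectangles. There is a unique value of $b$ (in the range $b>\max(a,\sqrt3)$) for which these lateral rectangles are squares.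
   Context: For $x\in\mathbb{R}^3$ with $|x|>1$, $S(x)$ is the sphere centered at $x$ with radius $\sqrt{|x|^2-1}$; its intersection with the unit ball is a hyperbolic plane. $H(x)$ is the unbounded component of $\mathbb{R}^3\setminus S(x)$. For $a>1$, $P_{4,3}(a)$ is the intersection of the unit ball with $H(ax)$ for all $x\in\{(\pm1,0,0),(0,\pm1,0),(0,0,\pm1)\}$ (a generalized hyperbolic cube). For $a>\sqrt2$ adjacent faces meet at angle $\alpha$ with $\cos\alpha=1/(a^2-1)$. *)

theory Defs
  imports "HOL-Analysis.Analysis"
begin

type_synonym pt = "real^3"

definition coords :: "pt set" where
  "coords = {axis i 1 | i. True} \<union> {- axis i 1 | i. True}"

definition srad :: "pt \<Rightarrow> real" where
  "srad x = sqrt ((norm x)^2 - 1)"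

definition S :: "pt \<Rightarrow> pt set" where
  "S x = sphere x (srad x)"

text \<open>H(x): the unbounded component of R^3 minus S(x)
  (library notion: union of the unbounded components of the complement).\<close>
definition H :: "pt \<Rightarrow> pt set" where
  "H x = outside (S x)"

definition P43 :: "real \<Rightarrow> pt set" where
  "P43 a = ball 0 1 \<inter> (\<Inter>e\<in>coords. H (a *\<^sub>R e))"

definition refl :: "pt \<Rightarrow> pt \<Rightarrow> pt" where
  "refl x y = x + ((srad x)^2 / (norm (y - x))^2) *\<^sub>R (y - x)"

definition hdist :: "pt \<Rightarrow> pt \<Rightarrow> real" where
  "hdist x y = arcosh (1 + 2 * (norm (x - y))^2 / ((1 - (norm x)^2) * (1 - (norm y)^2)))"

definition cube_vertex :: "real \<Rightarrow> pt \<Rightarrow> bool" where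
  "cube_vertex b v \<longleftrightarrow> v \<in> closure (P43 b) \<and> v \<in> ball 0 1 \<and>
      card {e \<in> coords. v \<in> S (b *\<^sub>R e)} \<ge> 3"

definition lateral_faces_square :: "real \<Rightarrow> real \<Rightarrow> bool" where
  "lateral_faces_square a b \<longleftrightarrow>
     (\<forall>e\<in>coords. \<forall>v w.
        cube_vertex b v \<and> cube_vertex b w \<and> v \<noteq> w \<and>
        v \<in> S (b *\<^sub>R e) \<and> w \<in> S (b *\<^sub>R e) \<and>
        (\<exists>e'\<in>coords. e' \<noteq> e \<and> v \<in> S (b *\<^sub>R e') \<and> w \<in> S (b *\<^sub>R e')) \<longrightarrow>
        (let v' = refl (a *\<^sub>R e) v; w' = refl (a *\<^sub>R e) w in
           hdist v w = hdist w w' \<and> hdist w w' = hdist w' v' \<and>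
           hdist w' v' = hdist v' v))"

end

theory Submission
  imports Defs
begin

lemma outside_sphere: "0 < r \<Longrightarrow> outside (sphere (c::pt) r) = - cball c r"
  by (metis frontier_cball outside_frontier_eq_complement_closure bounded_cball convex_cball closure_closed closed_cball)

lemma coords_iff: "e \<in> coords \<longleftrightarrow> (\<exists>i. e = axis i 1 \<or> e = - axis i 1)"
  unfolding coords_def by auto

lemma fc: "finite coords"
proof -
  have eq: "coords = range (\<lambda>i::3. axis i (1::real)) \<union> range (\<lambda>i. - axis i 1)" unfolding coords_def by auto
  show ?thesis unfolding eq by (intro finite_UnI finite_imageI finite_class.finite_UNIV)
qed

lemma coords_norm: "e \<in> coords \<Longrightarrow> norm e = 1"
  unfolding coords_iff by auto

lemma normsq3: "norm (x::pt) ^ 2 = x$1^2 + x$2^2 + x$3^2"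
  unfolding power2_norm_eq_inner inner_vec_def sum_3 by (simp add: power2_eq_square)

lemma srad_sq: "norm x \<ge> 1 \<Longrightarrow> srad x ^ 2 = norm x ^ 2 - 1"
  unfolding srad_def by (simp add: one_le_power)

lemma mem_S:
  assumes "b > 1" "e \<in> coords"
  shows "x \<in> S (b *\<^sub>R e) \<longleftrightarrow> norm x ^ 2 + 1 = 2 * b * (e \<bullet> x)"
proof -
  have ne: "norm e = 1" using assms coords_norm by auto
  have nb: "norm (b *\<^sub>R e) = b" using ne assms by simp
  have sr: "srad (b *\<^sub>R e) = sqrt (b^2 - 1)" unfolding srad_def nb ..
  have sr0: "sqrt (b^2-1) \<ge> 0" using assms by simp
  have "x \<in> S (b *\<^sub>R e) \<longleftrightarrow> norm (x - b *\<^sub>R e) = sqrt (b^2-1)"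
    unfolding S_def sr by (simp add: dist_norm norm_minus_commute)
  also have "\<dots> \<longleftrightarrow> norm (x - b *\<^sub>R e) ^ 2 = b^2 - 1"
    proof -
    have "norm (x - b *\<^sub>R e) = sqrt (norm (x - b *\<^sub>R e) ^ 2)" by simp
    then show ?thesis by (metis real_sqrt_eq_iff)
  qed
  also have "norm (x - b *\<^sub>R e) ^ 2 = norm x ^ 2 - 2 * b * (e \<bullet> x) + b^2"
  proof -
    have ee: "e \<bullet> e = 1" using ne by (simp add: norm_eq_1)
    show ?thesis unfolding power2_norm_eq_inner using ee
      by (simp add: inner_diff_left inner_diff_right inner_commute power2_eq_square algebra_simps)
  qed
  finally show ?thesis by auto
qed

lemma exh: "(l::3) = i \<or> l = j \<or> l = k \<or> i = j \<or> i = k \<or> j = k"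
  using exhaust_3[of i] exhaust_3[of j] exhaust_3[of k] exhaust_3[of l] by metis

definition tb :: "real \<Rightarrow> real" where "tb b = (b - sqrt (b^2 - 3)) / 3"

lemma tb_props:
  assumes "b > sqrt 3"
  shows "tb b > 0" "3 * tb b ^ 2 - 2 * b * tb b + 1 = 0" "3 * tb b ^ 2 < 1" "b > 1"
proof -
  have b0: "b > 0" using assms(1) real_sqrt_gt_zero[of 3] by linarith
  have "sqrt 3 ^ 2 < b^2" using assms(1) by (intro power_strict_mono) auto
  hence b3: "b^2 > 3" by simp
  define s where "s = sqrt (b^2 - 3)"
  have s0: "s \<ge> 0" and ss: "s^2 = b^2 - 3" using b3 by (auto simp: s_def)
  have "s^2 < b^2" using ss by simp
  hence sb: "s < b" using power_less_imp_less_base[of s 2 b] b0 by simp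
  define t where "t = tb b"
  have t3: "3 * t = b - s" unfolding t_def tb_def s_def by simp
  show tpos: "tb b > 0" using sb t3 t_def by simp
  have "9 * (3 * t^2 - 2 * b * t + 1) = 3 * (3*t)^2 - 6 * b * (3 * t) + 9"
    by (simp add: algebra_simps power2_eq_square)
  also have "\<dots> = 3 * (s^2 - b^2 + 3)" unfolding t3 by (simp add: algebra_simps power2_eq_square)
  also have "\<dots> = 0" using ss by simp
  finally show "3 * tb b ^ 2 - 2 * b * tb b + 1 = 0" using t_def by simp
  define u where "u = (b + s) / 3"
  have u3: "3 * u = b + s" unfolding u_def by simp
  have "9 * (t * u) = (3 * t) * (3 * u)" by simp
  also have "\<dots> = b^2 - s^2" unfolding t3 u3 by (simp add: algebra_simps power2_eq_square)
  also have "\<dots> = 3" using ss by simp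
  finally have tu: "t * u = 1/3" by simp
  have "s > 0" using b3 by (simp add: s_def)
  hence "t < u" using t3 u3 by linarith
  hence "t * t < t * u" using tpos t_def by (intro mult_strict_left_mono) auto
  thus "3 * tb b ^ 2 < 1" using tu t_def by (simp add: power2_eq_square)
  have "(1::real) < sqrt 3" by (rule real_less_rsqrt) simp
  thus "b > 1" using assms(1) by linarith
qed

lemma quad_root:
  assumes "b > sqrt 3" "c > 0" "3 * c^2 - 2 * b * c + 1 = 0" "3 * c^2 < 1"
  shows "c = tb b"
proof -
  define s where "s = sqrt (b^2 - 3)"
  have b0: "b > 0" using assms(1) real_sqrt_gt_zero[of 3] by linarith
  have "sqrt 3 ^ 2 < b^2" using assms(1) by (intro power_strict_mono) auto
  hence b3: "b^2 > 3" by simp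
  have s0: "s \<ge> 0" and ss: "s^2 = b^2 - 3" using b3 by (auto simp: s_def)
  have "(3*c - (b - s)) * (3*c - (b + s)) = 3 * (3 * c^2 - 2 * b * c + 1)"
    using ss by (simp add: algebra_simps power2_eq_square)
  hence "3*c - (b - s) = 0 \<or> 3*c - (b + s) = 0" using assms(3) by simp
  hence "c = (b - s)/3 \<or> c = (b + s)/3" by auto
  moreover have "c \<noteq> (b + s)/3"
  proof
    assume "c = (b + s)/3"
    hence "c \<ge> b/3" using s0 by simp
    hence "c^2 \<ge> (b/3)^2" using b0 by (intro power_mono) auto
    hence "3 * c^2 \<ge> b^2/3" by (simp add: power_divide)
    thus False using assms(4) b3 by simp
  qed
  ultimately show ?thesis unfolding tb_def s_def by auto
qed

lemma vertex_coords:
  assumes b: "b > sqrt 3" and v: "cube_vertex b v"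
  shows "\<forall>i. \<bar>v$i\<bar> = tb b"
proof -
  have b1: "b > 1" using tb_props[OF b] by simp
  define A where "A = {e \<in> coords. v \<in> S (b *\<^sub>R e)}"
  define c where "c = (norm v ^ 2 + 1) / (2 * b)"
  have c0: "c > 0" using b1 unfolding c_def by (simp add: add_nonneg_pos)
  have eA: "e \<bullet> v = c" if "e \<in> A" for e
    using that mem_S[OF b1, of e v] b1 unfolding A_def c_def by auto
  define f where "f = (\<lambda>i::3. if v$i \<ge> 0 then (axis i 1 :: pt) else - axis i 1)"
  define I where "I = {i. \<bar>v$i\<bar> = c}"
  have "A \<subseteq> f ` I"
  proof
    fix e assume eA': "e \<in> A"
    then obtain i where "e = axis i 1 \<or> e = - axis i 1" unfolding A_def coords_iff by auto
    thus "e \<in> f ` I"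
    proof
      assume e: "e = axis i 1"
      hence "v$i = c" using eA[OF eA'] by (simp add: inner_axis')
      thus ?thesis using c0 e unfolding f_def I_def by (intro image_eqI[of _ _ i]) auto
    next
      assume e: "e = - axis i 1"
      hence "v$i = - c" using eA[OF eA'] by (simp add: inner_axis')
      thus ?thesis using c0 e unfolding f_def I_def by (intro image_eqI[of _ _ i]) auto
    qed
  qed
  hence "card A \<le> card (f ` I)" by (intro card_mono) auto
  also have "\<dots> \<le> card I" by (rule card_image_le) auto
  finally have "card I \<ge> 3" using v unfolding cube_vertex_def A_def by simp
  moreover have "card I \<le> 3" using card_mono[of UNIV I] by simp
  ultimately have "card I = card (UNIV :: 3 set)" by simp
  hence IU: "I = UNIV" by (intro card_eq_UNIV_imp_eq_UNIV) auto
  hence vi: "\<forall>i. \<bar>v$i\<bar> = c" unfolding I_def by auto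
  have "v$i ^ 2 = c^2" for i using vi by (metis power2_abs)
  hence "norm v ^ 2 = 3 * c^2" unfolding normsq3 by simp
  moreover have "norm v ^ 2 + 1 = 2 * b * c" unfolding c_def using b1 by simp
  moreover have "norm v ^ 2 < 1 ^ 2" using v unfolding cube_vertex_def by (intro power_strict_mono) auto
  ultimately have "3 * c^2 - 2 * b * c + 1 = 0" "3 * c^2 < 1"
    by (auto simp: power_less_one_iff abs_square_less_1)
  hence "c = tb b" using quad_root[OF b c0] by simp
  thus ?thesis using vi by simp
qed

lemma norm_vert:
  fixes v :: pt
  assumes "\<forall>i. \<bar>v$i\<bar> = t" shows "norm v ^ 2 = 3 * t^2"
proof -
  have "v$i ^ 2 = t^2" for i using assms by (metis power2_abs)
  thus ?thesis unfolding normsq3 by simp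
qed

lemma inner_coords_le:
  assumes "e \<in> coords" "\<forall>i. \<bar>v$i\<bar> = t" shows "e \<bullet> v \<le> t"
proof -
  have h: "v$i \<le> t \<and> - v$i \<le> t" for i using assms(2) by (metis abs_le_iff order_refl)
  show ?thesis using assms(1) h unfolding coords_iff by (auto simp: inner_axis')
qed

lemma face_iff:
  assumes b: "b > sqrt 3" and v: "\<forall>i. \<bar>v$i\<bar> = tb b" and e: "e \<in> coords"
  shows "v \<in> S (b *\<^sub>R e) \<longleftrightarrow> e \<bullet> v = tb b"
proof -
  note tp = tb_props[OF b]
  have "v \<in> S (b *\<^sub>R e) \<longleftrightarrow> 3 * tb b ^ 2 + 1 = 2 * b * (e \<bullet> v)"
    using mem_S[OF tp(4) e] norm_vert[OF v] by simp
  also have "3 * tb b ^ 2 + 1 = 2 * b * tb b" using tp(2) by simp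
  finally show ?thesis using tp(4) by auto
qed

lemma vert_in_ball:
  fixes v :: pt
  assumes b: "b > sqrt 3" and v: "\<forall>i. \<bar>v$i\<bar> = tb b" shows "norm v < 1"
proof -
  have "norm v ^ 2 < 1" using norm_vert[OF v] tb_props(3)[OF b] by simp
  thus ?thesis using power_less_imp_less_base[of "norm v" 2 1] by simp
qed

lemma scaled_in_P:
  fixes v :: pt
  assumes b: "b > sqrt 3" and v: "\<forall>i. \<bar>v$i\<bar> = tb b" and s: "0 \<le> s" "s < 1"
  shows "s *\<^sub>R v \<in> P43 b"
proof -
  note tp = tb_props[OF b]
  define t where "t = tb b"
  have nv: "norm v < 1" using vert_in_ball[OF b v] .
  have "norm (s *\<^sub>R v) = s * norm v" using s by simp
  also have "\<dots> \<le> 1 * norm v" using s by (intro mult_right_mono) auto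
  finally have "norm (s *\<^sub>R v) < 1" using nv by simp
  moreover have "s *\<^sub>R v \<in> H (b *\<^sub>R e)" if e: "e \<in> coords" for e
  proof -
    have ne: "norm e = 1" using coords_norm[OF e] .
    have ee: "e \<bullet> e = 1" using ne by (simp add: norm_eq_1)
    have nbe: "norm (b *\<^sub>R e) = b" using ne tp(4) by simp
    have sr: "srad (b *\<^sub>R e) = sqrt (b^2 - 1)" unfolding srad_def nbe ..
    have srpos: "srad (b *\<^sub>R e) > 0" unfolding sr using tp(4) by simp
    have ev: "e \<bullet> v \<le> t" using inner_coords_le[OF e v] t_def by simp
    have d2: "norm (s *\<^sub>R v - b *\<^sub>R e) ^ 2 = s^2 * (3 * t^2) - 2 * b * s * (e \<bullet> v) + b^2"
      unfolding power2_norm_eq_inner using ee norm_vert[OF v, unfolded power2_norm_eq_inner] t_def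
      by (simp add: inner_diff_left inner_diff_right inner_commute power2_eq_square algebra_simps)
    have "2 * b * s * (e \<bullet> v) \<le> 2 * b * s * t" using ev s tp(4) by (simp add: mult_left_mono)
    moreover have "s^2 * (3 * t^2) - 2 * b * s * t + 1 = (1 - s) * (1 - 3 * t^2 * s)"
    proof -
      have "s^2 * (3 * t^2) - 2 * b * s * t + 1 - (1 - s) * (1 - 3 * t^2 * s) = s * (3 * t^2 - 2 * b * t + 1)"
        by (simp add: algebra_simps power2_eq_square)
      thus ?thesis using tp(2) unfolding t_def[symmetric] by simp
    qed
    moreover have "(1 - s) * (1 - 3 * t^2 * s) > 0"
    proof -
      have "3 * t^2 * s \<le> 3 * t^2" using s by (simp add: mult_left_le)
      thus ?thesis using s tp(3) t_def by (intro mult_pos_pos) auto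
    qed
    ultimately have "norm (s *\<^sub>R v - b *\<^sub>R e) ^ 2 > b^2 - 1" using d2 by linarith
    hence "norm (s *\<^sub>R v - b *\<^sub>R e) ^ 2 > sqrt (b^2 - 1) ^ 2" using tp(4) by simp
    hence "norm (s *\<^sub>R v - b *\<^sub>R e) > sqrt (b^2 - 1)"
      using power_less_imp_less_base[of "sqrt (b^2 - 1)" 2 "norm (s *\<^sub>R v - b *\<^sub>R e)"] by simp
    thus ?thesis unfolding H_def S_def sr outside_sphere[OF srpos[unfolded sr]]
      by (simp add: dist_norm norm_minus_commute)
  qed
  ultimately show ?thesis unfolding P43_def by auto
qed

lemma vert_in_closure:
  fixes v :: pt
  assumes b: "b > sqrt 3" and v: "\<forall>i. \<bar>v$i\<bar> = tb b"
  shows "v \<in> closure (P43 b)"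
proof (rule iffD2[OF closure_approachable], intro allI impI)
  fix ep :: real assume ep: "ep > 0"
  define s where "s = 1 - min (1/2) (ep/2)"
  have s: "0 \<le> s" "s < 1" using ep unfolding s_def by auto
  have "dist (s *\<^sub>R v) v = (1 - s) * norm v"
  proof -
    have "s *\<^sub>R v - v = (s - 1) *\<^sub>R v" by (simp add: algebra_simps)
    hence "norm (s *\<^sub>R v - v) = \<bar>s - 1\<bar> * norm v" by simp
    thus ?thesis unfolding dist_norm using s by simp
  qed
  also have "\<dots> \<le> (1 - s)" using vert_in_ball[OF b v] s by (simp add: mult_left_le)
  also have "\<dots> < ep" using ep unfolding s_def by auto
  finally show "\<exists>y\<in>P43 b. dist y v < ep" using scaled_in_P[OF b v s] by blast
qed

lemma inv_facts:
  fixes c y :: pt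
  assumes "norm c ^ 2 = r2 + 1" "norm (y - c) ^ 2 = D" "D > 0" "k = r2 / D"
  shows "1 - norm (c + k *\<^sub>R (y - c)) ^ 2 = k * (1 - norm y ^ 2)"
    and "norm (y - (c + k *\<^sub>R (y - c))) ^ 2 = (1 - k)^2 * D"
proof -
  have kD: "k * D = r2" using assms by simp
  have D: "D = y \<bullet> y - 2 * (c \<bullet> y) + c \<bullet> c" using assms(2) unfolding power2_norm_eq_inner
    by (simp add: inner_diff_left inner_diff_right inner_commute)
  have cc: "c \<bullet> c = r2 + 1" using assms(1) unfolding power2_norm_eq_inner .
  have "norm (c + k *\<^sub>R (y - c)) ^ 2 = c \<bullet> c + 2 * k * (c \<bullet> y - c \<bullet> c) + k^2 * D"
    unfolding assms(2)[symmetric] power2_norm_eq_inner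
    by (simp add: inner_diff_left inner_diff_right inner_add_left inner_add_right inner_commute algebra_simps power2_eq_square)
  also have "\<dots> = c \<bullet> c + 2 * k * (c \<bullet> y - c \<bullet> c) + k * r2"
    using kD by (simp add: power2_eq_square mult.assoc)
  finally have "1 - norm (c + k *\<^sub>R (y - c)) ^ 2 = 1 - (c \<bullet> c + 2 * k * (c \<bullet> y - c \<bullet> c) + k * r2)" by simp
  also have "\<dots> = k * (1 - y \<bullet> y) + (k * D - r2)"
    unfolding D cc by (simp add: algebra_simps)
  also have "\<dots> = k * (1 - norm y ^ 2)" using kD by (simp add: power2_norm_eq_inner)
  finally show "1 - norm (c + k *\<^sub>R (y - c)) ^ 2 = k * (1 - norm y ^ 2)" .
  have "y - (c + k *\<^sub>R (y - c)) = (1 - k) *\<^sub>R (y - c)" by (simp add: algebra_simps)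
  thus "norm (y - (c + k *\<^sub>R (y - c))) ^ 2 = (1 - k)^2 * D"
    using assms(2) by (simp add: power_mult_distrib)
qed

lemma edge_hdist:
  fixes v w e :: pt and a b :: real
  assumes a: "a > 1" and b: "b > sqrt 3" and e: "e \<in> coords"
    and v: "\<forall>i. \<bar>v$i\<bar> = tb b" and w: "\<forall>i. \<bar>w$i\<bar> = tb b"
    and ev: "e \<bullet> v = tb b" and ew: "e \<bullet> w = tb b"
    and vw: "norm (v - w) ^ 2 = 4 * tb b ^ 2"
  shows "hdist v w = arcosh (1 + 2 * (4 * tb b ^ 2) / ((1 - 3 * tb b ^ 2) * (1 - 3 * tb b ^ 2)))"
    and "hdist w (refl (a *\<^sub>R e) w) =
           arcosh (1 + 2 * (4 * tb b ^ 2 * (b - a)^2 / (a^2 - 1)) / ((1 - 3 * tb b ^ 2) * (1 - 3 * tb b ^ 2)))"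
    and "hdist (refl (a *\<^sub>R e) w) (refl (a *\<^sub>R e) v) = hdist v w"
    and "hdist (refl (a *\<^sub>R e) v) v = hdist w (refl (a *\<^sub>R e) w)"
proof -
  note tp = tb_props[OF b]
  define t where "t = tb b"
  define c where "c = a *\<^sub>R e"
  have ne: "norm e = 1" using coords_norm[OF e] .
  have ee: "e \<bullet> e = 1" using ne by (simp add: norm_eq_1)
  have nc: "norm c = a" unfolding c_def using ne a by simp
  have sr2: "srad c ^ 2 = a^2 - 1" using srad_sq[of c] nc a by simp
  define D where "D = 3 * t^2 - 2 * a * t + a^2"
  have Dpos: "D > 0"
  proof -
    have "D = (a - t)^2 + 2 * t^2" unfolding D_def by (simp add: algebra_simps power2_eq_square)
    moreover have "t^2 > 0" using tp(1) t_def by simp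
    ultimately show ?thesis by (smt (verit) zero_le_power2)
  qed
  have Dgen: "norm (x - c) ^ 2 = D" if "\<forall>i. \<bar>x$i\<bar> = tb b" "e \<bullet> x = tb b" for x
  proof -
    have "norm (x - c) ^ 2 = x \<bullet> x - 2 * a * (e \<bullet> x) + a^2 * (e \<bullet> e)"
      unfolding c_def power2_norm_eq_inner
      by (simp add: inner_diff_left inner_diff_right inner_commute algebra_simps power2_eq_square)
    also have "\<dots> = D" using norm_vert[OF that(1)] that(2) ee unfolding D_def t_def power2_norm_eq_inner by simp
    finally show ?thesis .
  qed
  have Dv: "norm (v - c) ^ 2 = D" using Dgen v ev by simp
  have Dw: "norm (w - c) ^ 2 = D" using Dgen w ew by simp
  define k where "k = (a^2 - 1) / D"
  have kpos: "k > 0" unfolding k_def using Dpos a by simp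
  have ccn: "norm c ^ 2 = (a^2 - 1) + 1" using nc by simp
  have rv: "refl (a *\<^sub>R e) v = c + k *\<^sub>R (v - c)" unfolding refl_def c_def[symmetric] sr2 Dv k_def ..
  have rw: "refl (a *\<^sub>R e) w = c + k *\<^sub>R (w - c)" unfolding refl_def c_def[symmetric] sr2 Dw k_def ..
  note iv = inv_facts[OF ccn Dv Dpos k_def] and iw = inv_facts[OF ccn Dw Dpos k_def]
  have nv: "1 - norm v ^ 2 = 1 - 3 * t^2" using norm_vert[OF v] t_def by simp
  have nw: "1 - norm w ^ 2 = 1 - 3 * t^2" using norm_vert[OF w] t_def by simp
  have q: "1 - 3 * t^2 > 0" using tp(3) t_def by simp
  define Q where "Q = 1 - 3 * t^2"
  have Qpos: "Q > 0" using q Q_def by simp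
  have nv': "1 - norm v ^ 2 = Q" using nv Q_def by simp
  have nw': "1 - norm w ^ 2 = Q" using nw Q_def by simp
  have vw': "norm (c + k *\<^sub>R (w - c) - (c + k *\<^sub>R (v - c))) ^ 2 = k^2 * (4 * t^2)"
  proof -
    have "c + k *\<^sub>R (w - c) - (c + k *\<^sub>R (v - c)) = k *\<^sub>R (w - v)" by (simp add: algebra_simps)
    moreover have "norm (w - v) ^ 2 = 4 * t^2" using vw t_def by (simp add: norm_minus_commute)
    moreover have "norm (k *\<^sub>R (w - v)) ^ 2 = k^2 * norm (w - v) ^ 2"
      by (simp only: norm_scaleR power_mult_distrib power2_abs)
    ultimately show ?thesis by simp
  qed
  have kr: "a^2 - 1 = k * D" unfolding k_def using Dpos by simp
  have Y: "(1 - k)^2 * D / k = 4 * t^2 * (b - a)^2 / (a^2 - 1)"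
  proof -
    have e1: "(1 - k) * D = 2 * t * (b - a)"
    proof -
      have "(1 - k) * D = D - (a^2 - 1)" using kr by (simp add: algebra_simps)
      also have "\<dots> = 2 * t * (b - a)"
        using tp(2) unfolding D_def t_def[symmetric] by (simp add: algebra_simps)
      finally show ?thesis .
    qed
    have "(1 - k)^2 * D / k * (a^2 - 1) = ((1 - k) * D)^2"
      unfolding kr using kpos by (simp add: power2_eq_square)
    also have "\<dots> = 4 * t^2 * (b - a)^2" unfolding e1 by (simp add: power_mult_distrib)
    moreover have "a^2 - 1 > 0" using a by (simp add: one_less_power)
    ultimately show ?thesis by (simp add: eq_divide_eq)
  qed
  show h1: "hdist v w = arcosh (1 + 2 * (4 * tb b ^ 2) / ((1 - 3 * tb b ^ 2) * (1 - 3 * tb b ^ 2)))"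
    unfolding hdist_def nv nw vw t_def ..
  have "hdist w (refl (a *\<^sub>R e) w) = arcosh (1 + 2 * ((1 - k)^2 * D) / (Q * (k * Q)))"
    unfolding hdist_def rw iw(1) iw(2) nw' ..
  also have "2 * ((1 - k)^2 * D) / (Q * (k * Q)) = 2 * ((1 - k)^2 * D / k) / (Q * Q)"
    by (simp add: mult.commute mult.left_commute)
  finally show h2: "hdist w (refl (a *\<^sub>R e) w) =
           arcosh (1 + 2 * (4 * tb b ^ 2 * (b - a)^2 / (a^2 - 1)) / ((1 - 3 * tb b ^ 2) * (1 - 3 * tb b ^ 2)))"
    unfolding Y Q_def t_def .
  have "hdist (refl (a *\<^sub>R e) w) (refl (a *\<^sub>R e) v) =
     arcosh (1 + 2 * (k^2 * (4 * t^2)) / ((k * Q) * (k * Q)))"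
    unfolding hdist_def rw rv iw(1) iv(1) nv' nw' vw' ..
  also have "2 * (k^2 * (4 * t^2)) / ((k * Q) * (k * Q)) = 2 * (4 * t^2) / (Q * Q)"
    using kpos by (simp add: power2_eq_square)
  finally show "hdist (refl (a *\<^sub>R e) w) (refl (a *\<^sub>R e) v) = hdist v w" unfolding h1 Q_def t_def .
  have "hdist (refl (a *\<^sub>R e) v) v = arcosh (1 + 2 * ((1 - k)^2 * D) / ((k * Q) * Q))"
    unfolding hdist_def rv iv(1) nv' norm_minus_commute[of "c + k *\<^sub>R (v - c)"] iv(2) ..
  also have "\<dots> = arcosh (1 + 2 * ((1 - k)^2 * D) / (Q * (k * Q)))"
    by (simp only: mult.commute)
  also have "\<dots> = hdist w (refl (a *\<^sub>R e) w)"
    unfolding hdist_def rw iw(1) iw(2) nw' ..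
  finally show "hdist (refl (a *\<^sub>R e) v) v = hdist w (refl (a *\<^sub>R e) w)" .
qed
lemma coord_cases:
  fixes v :: pt
  assumes "e \<in> coords"
  obtains i where "e \<bullet> v = v$i" "e = axis i 1" | i where "e \<bullet> v = - v$i" "e = - axis i 1"
  using assms unfolding coords_iff by (auto simp: inner_axis')

lemma edge_len:
  fixes v w e e' :: pt
  assumes b: "b > sqrt 3" and e: "e \<in> coords" and e': "e' \<in> coords" and ne: "e' \<noteq> e"
    and v: "\<forall>i. \<bar>v$i\<bar> = tb b" and w: "\<forall>i. \<bar>w$i\<bar> = tb b"
    and ev: "e \<bullet> v = tb b" and ew: "e \<bullet> w = tb b"
    and ev': "e' \<bullet> v = tb b" and ew': "e' \<bullet> w = tb b" and vw: "v \<noteq> w"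
  shows "norm (v - w) ^ 2 = 4 * tb b ^ 2"
proof -
  have t0: "tb b > 0" using tb_props[OF b] by simp
  have same: "\<exists>i. v$i = w$i \<and> (f = axis i 1 \<or> f = - axis i 1) \<and> (f \<bullet> v = v$i \<or> f \<bullet> v = - v$i)"
    if f: "f \<in> coords" "f \<bullet> v = tb b" "f \<bullet> w = tb b" for f
  proof (cases rule: coord_cases[OF f(1), of v])
    case (1 i)
    then show ?thesis using f by (intro exI[of _ i]) (auto simp: inner_axis')
  next
    case (2 i)
    then show ?thesis using f by (intro exI[of _ i]) (auto simp: inner_axis')
  qed
  obtain i where i: "v$i = w$i" "e = axis i 1 \<or> e = - axis i 1" using same[OF e ev ew] by blast
  obtain j where j: "v$j = w$j" "e' = axis j 1 \<or> e' = - axis j 1" using same[OF e' ev' ew'] by blast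
  have ij: "i \<noteq> j"
  proof
    assume "i = j"
    hence "e' = - e" using i(2) j(2) ne by auto
    hence "e' \<bullet> v = - (e \<bullet> v)" by simp
    thus False using ev ev' t0 by simp
  qed
  obtain k where k: "v$k \<noteq> w$k" using vw by (auto simp: vec_eq_iff)
  have ki: "k \<noteq> i" "k \<noteq> j" using k i j by auto
  have "\<bar>w$k\<bar> = \<bar>v$k\<bar>" using v w by simp
  hence wk: "w$k = - v$k" using k by (auto simp: abs_if split: if_splits)
  have comp: "v$l - w$l = (if l = k then 2 * v$k else 0)" for l
    using exh[of l i j k] ij ki i(1) j(1) wk by auto
  have "norm (v - w) ^ 2 = (\<Sum>l\<in>UNIV. (v - w)$l * (v - w)$l)"
    unfolding power2_norm_eq_inner inner_vec_def by simp
  also have "\<dots> = (\<Sum>l\<in>UNIV. if l = k then (2 * v$k) * (2 * v$k) else 0)"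
    by (intro sum.cong) (auto simp: comp)
  also have "\<dots> = 4 * (v$k)^2" by (simp add: power2_eq_square)
  also have "(v$k)^2 = tb b ^ 2" using v by (metis power2_abs)
  finally show ?thesis .
qed

lemma arcosh_inj:
  fixes x y :: real
  assumes "1 \<le> x" "1 \<le> y" "arcosh x = arcosh y" shows "x = y"
  using assms arcosh_less_iff_real[of x y] arcosh_less_iff_real[of y x] by (cases x y rule: linorder_cases) auto

theorem mainTheorem2:
  fixes n :: nat and a :: real
  assumes "n > 4"
    and "a > sqrt 2"
    and "1 / (a^2 - 1) = cos (2 * pi / real n)"
  shows "\<exists>!b. b > a \<and> b > sqrt 3 \<and> lateral_faces_square a b"
proof -
  have "(1::real) < sqrt 2" by (rule real_less_rsqrt) simp
  hence a1: "a > 1" using assms(2) by linarith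
  have "sqrt 2 ^ 2 < a ^ 2" using assms(2) by (intro power_strict_mono) auto
  hence a2: "a^2 > 2" by simp
  define b0 where "b0 = a + sqrt (a^2 - 1)"
  have s1: "sqrt (a^2 - 1) > 1" using a2 by (intro real_less_rsqrt) simp
  have b0a: "b0 > a" using s1 b0_def by simp
  have s3: "sqrt 3 < 2" by (rule real_sqrt_less_iff[of 3 4, unfolded real_sqrt_four, THEN iffD2]) simp
  have b03: "b0 > sqrt 3" using s1 a1 s3 unfolding b0_def by linarith
  have sq: "(b0 - a)^2 = a^2 - 1" using a2 b0_def by simp
  have a21: "a^2 - 1 > 0" using a2 by simp
  have ex: "lateral_faces_square a b0"
    unfolding lateral_faces_square_def Let_def
  proof (intro ballI allI impI)
    fix e v w assume e: "e \<in> coords" and H: "cube_vertex b0 v \<and> cube_vertex b0 w \<and> v \<noteq> w \<and>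
        v \<in> S (b0 *\<^sub>R e) \<and> w \<in> S (b0 *\<^sub>R e) \<and>
        (\<exists>e'\<in>coords. e' \<noteq> e \<and> v \<in> S (b0 *\<^sub>R e') \<and> w \<in> S (b0 *\<^sub>R e'))"
    then obtain e' where e': "e' \<in> coords" "e' \<noteq> e" "v \<in> S (b0 *\<^sub>R e')" "w \<in> S (b0 *\<^sub>R e')" by blast
    have vc: "\<forall>i. \<bar>v$i\<bar> = tb b0" using vertex_coords[OF b03] H by blast
    have wc: "\<forall>i. \<bar>w$i\<bar> = tb b0" using vertex_coords[OF b03] H by blast
    have ev: "e \<bullet> v = tb b0" using face_iff[OF b03 vc e] H by blast
    have ew: "e \<bullet> w = tb b0" using face_iff[OF b03 wc e] H by blast
    have ev': "e' \<bullet> v = tb b0" using face_iff[OF b03 vc e'(1)] e' by blast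
    have ew': "e' \<bullet> w = tb b0" using face_iff[OF b03 wc e'(1)] e' by blast
    have vw: "norm (v - w) ^ 2 = 4 * tb b0 ^ 2"
      using edge_len[OF b03 e e'(1) e'(2) vc wc ev ew ev' ew'] H by blast
    note hd = edge_hdist[OF a1 b03 e vc wc ev ew vw]
    have "4 * tb b0 ^ 2 * (b0 - a)^2 / (a^2 - 1) = 4 * tb b0 ^ 2" unfolding sq using a21 by simp
    hence "hdist v w = hdist w (refl (a *\<^sub>R e) w)" unfolding hd(1) hd(2) by simp
    thus "hdist v w = hdist w (refl (a *\<^sub>R e) w) \<and>
       hdist w (refl (a *\<^sub>R e) w) = hdist (refl (a *\<^sub>R e) w) (refl (a *\<^sub>R e) v) \<and>
       hdist (refl (a *\<^sub>R e) w) (refl (a *\<^sub>R e) v) = hdist (refl (a *\<^sub>R e) v) v"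
      using hd(3) hd(4) by simp
  qed
  have uniq: "b = b0" if b: "b > a" "b > sqrt 3" "lateral_faces_square a b" for b
  proof -
    note tp = tb_props[OF b(2)]
    define t where "t = tb b"
    define v :: pt where "v = (\<chi> i. t)"
    define w :: pt where "w = (\<chi> i. if i = 2 then - t else t)"
    define e :: pt where "e = axis 1 1"
    define e' :: pt where "e' = axis 3 1"
    have vc: "\<forall>i. \<bar>v$i\<bar> = tb b" unfolding v_def t_def using tp by simp
    have wc: "\<forall>i. \<bar>w$i\<bar> = tb b" unfolding w_def t_def using tp by simp
    have ec: "e \<in> coords" "e' \<in> coords" unfolding e_def e'_def coords_iff by auto
    have ax: "axis i 1 \<in> coords" "- axis i 1 \<in> coords" for i :: 3 unfolding coords_iff by auto
    have d3: "card {axis 1 1, axis 2 1, axis 3 (1::real) :: pt} = 3"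
      by (simp add: axis_eq_axis)
    have d3': "card {axis 1 1, - axis 2 1, axis 3 (1::real) :: pt} = 3"
      by (simp add: vec_eq_iff axis_def forall_3)
    have cvv: "cube_vertex b v"
    proof -
      have sub: "{axis 1 1, axis 2 1, axis 3 1} \<subseteq> {e \<in> coords. v \<in> S (b *\<^sub>R e)}"
        using face_iff[OF b(2) vc] ax by (auto simp: inner_axis' v_def t_def)
      have "card {axis 1 1, axis 2 1, axis 3 (1::real) :: pt} \<le> card {e \<in> coords. v \<in> S (b *\<^sub>R e)}"
        by (rule card_mono[OF finite_subset[OF _ fc] sub]) blast
      thus ?thesis unfolding cube_vertex_def using vert_in_closure[OF b(2) vc] vert_in_ball[OF b(2) vc] d3 by simp
    qed
    have cvw: "cube_vertex b w"
    proof -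
      have sub: "{axis 1 1, - axis 2 1, axis 3 1} \<subseteq> {e \<in> coords. w \<in> S (b *\<^sub>R e)}"
      proof -
        have m1: "w \<in> S (b *\<^sub>R axis 1 1)" using face_iff[OF b(2) wc ax(1)[of 1]]
          by (simp add: inner_axis' w_def t_def)
        have m2: "w \<in> S (b *\<^sub>R (- axis 2 1))" using face_iff[OF b(2) wc ax(2)[of 2]]
          by (simp add: inner_axis' w_def t_def)
        have m3: "w \<in> S (b *\<^sub>R axis 3 1)" using face_iff[OF b(2) wc ax(1)[of 3]]
          by (simp add: inner_axis' w_def t_def)
        show ?thesis using m1 m2 m3 ax by blast
      qed
      have "card {axis 1 1, - axis 2 1, axis 3 (1::real) :: pt} \<le> card {e \<in> coords. w \<in> S (b *\<^sub>R e)}"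
        by (rule card_mono[OF finite_subset[OF _ fc] sub]) blast
      thus ?thesis unfolding cube_vertex_def using vert_in_closure[OF b(2) wc] vert_in_ball[OF b(2) wc] d3' by simp
    qed
    have vw: "v \<noteq> w" using tp unfolding v_def w_def t_def by (auto simp: vec_eq_iff)
    have ev: "e \<bullet> v = tb b" "e \<bullet> w = tb b" "e' \<bullet> v = tb b" "e' \<bullet> w = tb b"
      unfolding e_def e'_def v_def w_def t_def by (auto simp: inner_axis')
    have ee: "e' \<noteq> e" unfolding e_def e'_def by (simp add: axis_eq_axis)
    have len: "norm (v - w) ^ 2 = 4 * tb b ^ 2"
      unfolding normsq3 v_def w_def t_def by (simp add: power2_eq_square)
    have S1: "v \<in> S (b *\<^sub>R e)" "w \<in> S (b *\<^sub>R e)" "v \<in> S (b *\<^sub>R e')" "w \<in> S (b *\<^sub>R e')"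
      using face_iff[OF b(2) vc ec(1)] face_iff[OF b(2) wc ec(1)]
        face_iff[OF b(2) vc ec(2)] face_iff[OF b(2) wc ec(2)] ev by simp_all
    have P: "cube_vertex b v \<and> cube_vertex b w \<and> v \<noteq> w \<and>
        v \<in> S (b *\<^sub>R e) \<and> w \<in> S (b *\<^sub>R e) \<and>
        (\<exists>e'\<in>coords. e' \<noteq> e \<and> v \<in> S (b *\<^sub>R e') \<and> w \<in> S (b *\<^sub>R e'))"
      using cvv cvw vw S1 ec(2) ee by blast
    have "hdist v w = hdist w (refl (a *\<^sub>R e) w)"
      using b(3)[unfolded lateral_faces_square_def Let_def, rule_format, OF ec(1) P] by (rule conjunct1)
    note hd = edge_hdist[OF a1 b(2) ec(1) vc wc ev(1) ev(2) len]
    define Q where "Q = (1 - 3 * tb b ^ 2) * (1 - 3 * tb b ^ 2)"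
    have Qp: "Q > 0" unfolding Q_def using tp(3) by simp
    define X where "X = 4 * tb b ^ 2"
    have Xp: "X > 0" unfolding X_def using tp(1) by simp
    have "1 + 2 * X / Q = 1 + 2 * (X * (b - a)^2 / (a^2 - 1)) / Q"
    proof (rule arcosh_inj)
      show "1 \<le> 1 + 2 * X / Q" using Xp Qp by simp
      show "1 \<le> 1 + 2 * (X * (b - a)^2 / (a^2 - 1)) / Q" using Xp Qp a21 by simp
      show "arcosh (1 + 2 * X / Q) = arcosh (1 + 2 * (X * (b - a)^2 / (a^2 - 1)) / Q)"
        using \<open>hdist v w = hdist w (refl (a *\<^sub>R e) w)\<close> unfolding hd(1) hd(2) X_def Q_def .
    qed
    hence "2 * X / Q = 2 * (X * (b - a)^2 / (a^2 - 1)) / Q" by (rule add_left_imp_eq)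
    hence "2 * X = 2 * (X * (b - a)^2 / (a^2 - 1))" using Qp by (simp only: divide_cancel_right) simp
    hence "X * (a^2 - 1) = X * (b - a)^2" using a21 by (simp add: divide_simps)
    hence "(b - a)^2 = a^2 - 1" using Xp by simp
    hence "b - a = sqrt (a^2 - 1)" using b(1) by (metis real_sqrt_abs abs_of_pos diff_gt_0_iff_gt)
    thus ?thesis unfolding b0_def by simp
  qed
  show ?thesis using b0a b03 ex uniq by blast
qed

end
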